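(* Let $A=(a_{ij})_{1\le i,j\le n}$ be a complex Nekrasov matrix. Then there exist real numbers $\epsilon_1,\dots,\epsilon_n$ satisfying $$\epsilon_1>0,\qquad 0<\epsilon_i\le |a_{ii}|-h_i(A)\ \text{ and }\ \epsilon_i>\sum_{j=1}^{i-1}\frac{|a_{ij}|\,\epsilon_j}{|a_{jj}|}\quad\text{for } i=2,\dots,n,$$ and for any such numbers the diagonal matrix $$S=\mathrm{diag}\left(\frac{h_1(A)+\epsilon_1}{|a_{11}|},\dots,\frac{h_n(A)+\epsilon_n}{|a_{nn}|}\right)$$ has positive diagonal entries and $AS$ is strictly diagonally dominant by rows.
   Context: For a complex $n\times n$ matrix $A=(a_{ij})$ with $a_{ii}\ne 0$ for all $i$, define recursively $h_1(A):=\sum_{j\ne 1}|a_{1j}|$ and $h_i(A):=\sum_{j=1}^{i-1}|a_{ij}|\frac{h_j(A)}{|a_{jj}|}+\sum_{j=i+1}^{n}|a_{ij}|$ for $i=2,\dots,n$. $A$ is a Nekrasov matrix if $|a_{ii}|>h_i(A)$ for all $i\in\{1,\dots,n\}$. A matrix $B=(b_{ij})$ is strictly diagonally dominant by rows (SDD) if $|b_{ii}|>\sum_{j\ne i}|b_{ij}|$ for all $i$. *)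

theory Defs
  imports Complex_Main
begin

text \<open>Matrices of size n are represented as functions nat => nat => complex,
  with indices ranging over {1..n} (entries outside are irrelevant).\<close>

function nek_h :: "(nat \<Rightarrow> nat \<Rightarrow> complex) \<Rightarrow> nat \<Rightarrow> nat \<Rightarrow> real" where
  "nek_h A n i =
     (\<Sum>j\<in>{1..<i}. cmod (A i j) * nek_h A n j / cmod (A j j))
     + (\<Sum>j\<in>{i+1..n}. cmod (A i j))"
  by auto
termination
  by (relation "measure (\<lambda>(A, n, i). i)") auto

definition nekrasov :: "(nat \<Rightarrow> nat \<Rightarrow> complex) \<Rightarrow> nat \<Rightarrow> bool" where
  "nekrasov A n \<longleftrightarrow> (\<forall>i\<in>{1..n}. A i i \<noteq> 0) \<and>
     (\<forall>i\<in>{1..n}. cmod (A i i) > nek_h A n i)"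

definition sdd :: "(nat \<Rightarrow> nat \<Rightarrow> complex) \<Rightarrow> nat \<Rightarrow> bool" where
  "sdd B n \<longleftrightarrow> (\<forall>i\<in>{1..n}. cmod (B i i) > (\<Sum>j\<in>{1..n}-{i}. cmod (B i j)))"

definition mat_mult :: "nat \<Rightarrow> (nat \<Rightarrow> nat \<Rightarrow> complex) \<Rightarrow> (nat \<Rightarrow> nat \<Rightarrow> complex) \<Rightarrow> (nat \<Rightarrow> nat \<Rightarrow> complex)" where
  "mat_mult n A B = (\<lambda>i j. \<Sum>k\<in>{1..n}. A i k * B k j)"

definition diag_mat :: "(nat \<Rightarrow> real) \<Rightarrow> (nat \<Rightarrow> nat \<Rightarrow> complex)" where
  "diag_mat d = (\<lambda>i j. if i = j then complex_of_real (d i) else 0)"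

end

theory Submission
  imports Defs
begin

function nek_e :: "(nat \<Rightarrow> nat \<Rightarrow> complex) \<Rightarrow> nat \<Rightarrow> real" where
  "nek_e A i = 1 + (\<Sum>j\<in>{1..<i}. cmod (A i j) * nek_e A j / cmod (A j j))"
  by auto
termination
  by (relation "measure (\<lambda>(A, i). i)") auto

declare nek_e.simps[simp del] nek_h.simps[simp del]

lemma nek_e_pos: "nek_e A i \<ge> 1"
proof (induction i rule: less_induct)
  case (less i)
  have "(\<Sum>j\<in>{1..<i}. cmod (A i j) * nek_e A j / cmod (A j j)) \<ge> 0"
  proof (rule sum_nonneg)
    fix j assume "j \<in> {1..<i}"
    then have "nek_e A j \<ge> 1" using less by auto
    then show "0 \<le> cmod (A i j) * nek_e A j / cmod (A j j)" by simp
  qed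
  then show ?case by (subst nek_e.simps) simp
qed

lemma nek_h_nonneg: "nek_h A n i \<ge> 0"
proof (induction i rule: less_induct)
  case (less i)
  have "(\<Sum>j\<in>{1..<i}. cmod (A i j) * nek_h A n j / cmod (A j j)) \<ge> 0"
    by (rule sum_nonneg) (use less in auto)
  moreover have "(\<Sum>j\<in>{i+1..n}. cmod (A i j)) \<ge> 0" by (rule sum_nonneg) auto
  ultimately show ?case by (subst nek_h.simps) simp
qed

lemma mm_diag: "j \<in> {1..n} \<Longrightarrow> mat_mult n A (diag_mat S) i j = A i j * complex_of_real (S j)"
  unfolding mat_mult_def diag_mat_def
  by (simp add: if_distrib cong: if_cong)

theorem theorem2p1:
  fixes A :: "nat \<Rightarrow> nat \<Rightarrow> complex" and n :: nat
  assumes "nekrasov A n"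
  shows "(\<exists>\<epsilon> :: nat \<Rightarrow> real. \<epsilon> 1 > 0 \<and>
            (\<forall>i\<in>{2..n}. 0 < \<epsilon> i \<and> \<epsilon> i \<le> cmod (A i i) - nek_h A n i \<and>
               \<epsilon> i > (\<Sum>j\<in>{1..<i}. cmod (A i j) * \<epsilon> j / cmod (A j j))))
       \<and> (\<forall>\<epsilon> :: nat \<Rightarrow> real. \<epsilon> 1 > 0 \<and>
            (\<forall>i\<in>{2..n}. 0 < \<epsilon> i \<and> \<epsilon> i \<le> cmod (A i i) - nek_h A n i \<and>
               \<epsilon> i > (\<Sum>j\<in>{1..<i}. cmod (A i j) * \<epsilon> j / cmod (A j j)))
          \<longrightarrow> (let S = (\<lambda>i. (nek_h A n i + \<epsilon> i) / cmod (A i i)) in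
               (\<forall>i\<in>{1..n}. S i > 0) \<and> sdd (mat_mult n A (diag_mat S)) n))"
proof (intro conjI)
  have nz: "\<And>i. i \<in> {1..n} \<Longrightarrow> A i i \<noteq> 0" and dom: "\<And>i. i \<in> {1..n} \<Longrightarrow> cmod (A i i) > nek_h A n i"
    using assms unfolding nekrasov_def by auto
  define t where "t = Min ((\<lambda>i. (cmod (A i i) - nek_h A n i) / nek_e A i) ` {1..n} \<union> {1})"
  have fin: "finite ((\<lambda>i. (cmod (A i i) - nek_h A n i) / nek_e A i) ` {1..n} \<union> {1})" by auto
  have tpos: "t > 0"
    unfolding t_def
  proof (subst Min_gr_iff[OF fin])
    show "(\<lambda>i. (cmod (A i i) - nek_h A n i) / nek_e A i) ` {1..n} \<union> {1} \<noteq> {}" by auto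
    show "\<forall>a\<in>(\<lambda>i. (cmod (A i i) - nek_h A n i) / nek_e A i) ` {1..n} \<union> {1}. 0 < a"
    proof
      fix a assume "a \<in> (\<lambda>i. (cmod (A i i) - nek_h A n i) / nek_e A i) ` {1..n} \<union> {1}"
      then show "0 < a"
      proof
        assume "a \<in> (\<lambda>i. (cmod (A i i) - nek_h A n i) / nek_e A i) ` {1..n}"
        then obtain i where i: "i \<in> {1..n}" "a = (cmod (A i i) - nek_h A n i) / nek_e A i" by auto
        have "nek_e A i \<ge> 1" by (rule nek_e_pos)
        with dom[OF i(1)] i(2) show ?thesis by simp
      qed simp
    qed
  qed
  have tle: "t \<le> (cmod (A i i) - nek_h A n i) / nek_e A i" if "i \<in> {1..n}" for i
    unfolding t_def using that by (intro Min_le[OF fin]) auto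
  show "\<exists>\<epsilon> :: nat \<Rightarrow> real. \<epsilon> 1 > 0 \<and>
            (\<forall>i\<in>{2..n}. 0 < \<epsilon> i \<and> \<epsilon> i \<le> cmod (A i i) - nek_h A n i \<and>
               \<epsilon> i > (\<Sum>j\<in>{1..<i}. cmod (A i j) * \<epsilon> j / cmod (A j j)))"
  proof (rule exI[of _ "\<lambda>i. t * nek_e A i"], intro conjI ballI)
    show "0 < t * nek_e A 1" using tpos nek_e_pos[of A 1] by simp
    fix i assume i: "i \<in> {2..n}"
    show "0 < t * nek_e A i" using tpos nek_e_pos[of A i] by simp
    have e1: "nek_e A i \<ge> 1" by (rule nek_e_pos)
    have "t * nek_e A i \<le> (cmod (A i i) - nek_h A n i) / nek_e A i * nek_e A i"
      using tle[of i] i e1 by (intro mult_right_mono) auto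
    then show "t * nek_e A i \<le> cmod (A i i) - nek_h A n i" using e1 by simp
    have "(\<Sum>j\<in>{1..<i}. cmod (A i j) * (t * nek_e A j) / cmod (A j j))
        = t * (\<Sum>j\<in>{1..<i}. cmod (A i j) * nek_e A j / cmod (A j j))"
      by (simp add: sum_distrib_left mult_ac)
    also have "\<dots> < t * nek_e A i"
      using tpos by (subst (2) nek_e.simps) simp
    finally show "(\<Sum>j\<in>{1..<i}. cmod (A i j) * (t * nek_e A j) / cmod (A j j)) < t * nek_e A i" .
  qed
  show "\<forall>\<epsilon> :: nat \<Rightarrow> real. \<epsilon> 1 > 0 \<and>
            (\<forall>i\<in>{2..n}. 0 < \<epsilon> i \<and> \<epsilon> i \<le> cmod (A i i) - nek_h A n i \<and>
               \<epsilon> i > (\<Sum>j\<in>{1..<i}. cmod (A i j) * \<epsilon> j / cmod (A j j)))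
          \<longrightarrow> (let S = (\<lambda>i. (nek_h A n i + \<epsilon> i) / cmod (A i i)) in
               (\<forall>i\<in>{1..n}. S i > 0) \<and> sdd (mat_mult n A (diag_mat S)) n)"
  proof (intro allI impI)
    fix \<epsilon> :: "nat \<Rightarrow> real"
    assume H: "\<epsilon> 1 > 0 \<and>
            (\<forall>i\<in>{2..n}. 0 < \<epsilon> i \<and> \<epsilon> i \<le> cmod (A i i) - nek_h A n i \<and>
               \<epsilon> i > (\<Sum>j\<in>{1..<i}. cmod (A i j) * \<epsilon> j / cmod (A j j)))"
    define S where "S = (\<lambda>i. (nek_h A n i + \<epsilon> i) / cmod (A i i))"
    have epos: "\<epsilon> i > 0" if "i \<in> {1..n}" for i
      using H that by (cases "i = 1") auto
    have Spos: "S i > 0" if "i \<in> {1..n}" for i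
      unfolding S_def using epos[OF that] nek_h_nonneg[of A n i] nz[OF that] by simp
    have Sle: "S j \<le> 1" if "j \<in> {2..n}" for j
    proof -
      have "\<epsilon> j \<le> cmod (A j j) - nek_h A n j" using H that by auto
      then show ?thesis using nz[of j] that unfolding S_def by (simp add: divide_le_eq_1)
    qed
    have "sdd (mat_mult n A (diag_mat S)) n"
      unfolding sdd_def
    proof
      fix i assume i: "i \<in> {1..n}"
      let ?E = "\<Sum>j\<in>{1..<i}. cmod (A i j) * \<epsilon> j / cmod (A j j)"
      have Elt: "?E < \<epsilon> i"
      proof (cases "i = 1")
        case True then show ?thesis using H by simp
      next
        case False then show ?thesis using H i by auto
      qed
      have diag: "cmod (mat_mult n A (diag_mat S) i i) = nek_h A n i + \<epsilon> i"
      proof -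
        have "cmod (mat_mult n A (diag_mat S) i i) = cmod (A i i) * S i"
          using Spos[OF i] unfolding mm_diag[OF i] by (simp only: norm_mult norm_of_real)
        then show ?thesis using nz[OF i] unfolding S_def by simp
      qed
      have s1: "(\<Sum>j\<in>{1..n}-{i}. cmod (mat_mult n A (diag_mat S) i j))
          = (\<Sum>j\<in>{1..n}-{i}. cmod (A i j) * S j)"
      proof (rule sum.cong)
        fix j assume j: "j \<in> {1..n}-{i}"
        then have "S j > 0" using Spos by auto
        then show "cmod (mat_mult n A (diag_mat S) i j) = cmod (A i j) * S j"
        proof -
          have jn: "j \<in> {1..n}" using j by auto
          show ?thesis unfolding mm_diag[OF jn] using \<open>S j > 0\<close> by (simp only: norm_mult norm_of_real)
        qed
      qed simp
      have seq: "{1..n}-{i} = {1..<i} \<union> {i+1..n}" using i by auto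
      have s2: "(\<Sum>j\<in>{1..n}-{i}. cmod (A i j) * S j)
          = (\<Sum>j\<in>{1..<i}. cmod (A i j) * S j) + (\<Sum>j\<in>{i+1..n}. cmod (A i j) * S j)"
        unfolding seq by (rule sum.union_disjoint) auto
      have s3: "(\<Sum>j\<in>{1..<i}. cmod (A i j) * S j)
          = (\<Sum>j\<in>{1..<i}. cmod (A i j) * nek_h A n j / cmod (A j j)) + ?E"
        unfolding S_def sum.distrib[symmetric] by (intro sum.cong) (auto simp: add_divide_distrib distrib_left)
      have s4: "(\<Sum>j\<in>{i+1..n}. cmod (A i j) * S j) \<le> (\<Sum>j\<in>{i+1..n}. cmod (A i j))"
        using i Sle by (intro sum_mono) (auto intro: mult_left_le)
      have "(\<Sum>j\<in>{1..n}-{i}. cmod (mat_mult n A (diag_mat S) i j))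
          \<le> nek_h A n i + ?E"
        unfolding s1 s2 s3 using s4 by (subst (2) nek_h.simps) simp
      then show "(\<Sum>j\<in>{1..n}-{i}. cmod (mat_mult n A (diag_mat S) i j))
          < cmod (mat_mult n A (diag_mat S) i i)"
        using diag Elt by simp
    qed
    then show "let S = (\<lambda>i. (nek_h A n i + \<epsilon> i) / cmod (A i i)) in
               (\<forall>i\<in>{1..n}. S i > 0) \<and> sdd (mat_mult n A (diag_mat S)) n"
      using Spos unfolding S_def Let_def by auto
  qed
qed

end
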